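(* Let $\alpha,\beta$ be sets, $z\in\beta$, $\mathit{seq}:\beta\times\alpha\to\beta$ and $\mathit{comb}:\beta\times\beta\to\beta$, written $x\oplus y$. Let $\Gamma=\{\mathrm{foldl}(\mathit{seq},z,L) : L \text{ a finite list over }\alpha\}$. If calls $\mathrm{aggregate}(z,\mathit{seq},\mathit{comb},\mathit{rdd})$ have deterministic outcomes, then: (1) $z$ is an identity of $\oplus$ on $\Gamma$; (2) $\oplus$ is closed on $\Gamma$ (i.e. $x\oplus y\in\Gamma$ for $x,y\in\Gamma$); (3) $\oplus$ is commutative on $\Gamma$; (4) $\oplus$ is associative on $\Gamma$.
   Context: Lists are finite; $\mathbin{+\!\!+}$ is concatenation. $\mathrm{foldl}(f,b,[\,])=b$, $\mathrm{foldl}(f,b,[x_1,\dots,x_n])=f(\cdots f(f(b,x_1),x_2)\cdots,x_n)$. An RDD is a list of lists. A partitioning is a function $P$ sending each list $L$ over $\alpha$ to an RDD obtained by splitting $L$ into consecutive (possibly empty) pieces $p_1,\dots,p_n$ with $p_1\mathbin{+\!\!+}\cdots\mathbin{+\!\!+}p_n=L$ and then arbitrarily permuting $[p_1,\dots,p_n]$. $\mathrm{aggregate}_{\mathrm{det}}(z,\mathit{seq},\mathit{comb},[q_1,\dots,q_m])=\mathrm{foldl}(\mathit{comb},z,[\mathrm{foldl}(\mathit{seq},z,q_1),\dots,\mathrm{foldl}(\mathit{seq},z,q_m)])$. Calls $\mathrm{aggregate}(z,\mathit{seq},\mathit{comb},\mathit{rdd})$ have deterministic outcomes if $\mathrm{aggregate}_{\mathrm{det}}(z,\mathit{seq},\mathit{comb},P(L))=\mathrm{foldl}(\mathit{seq},z,L)$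 for all lists $L$ over $\alpha$ and all partitionings $P$. *)

theory Defs
  imports Main "HOL-Library.Multiset"
begin

text \<open>An RDD is a list of lists.\<close>

definition is_partitioning :: "('a list \<Rightarrow> 'a list list) \<Rightarrow> bool" where
  "is_partitioning P \<longleftrightarrow> (\<forall>L. \<exists>ps. concat ps = L \<and> mset (P L) = mset ps)"

definition aggregate_det ::
  "'b \<Rightarrow> ('b \<Rightarrow> 'a \<Rightarrow> 'b) \<Rightarrow> ('b \<Rightarrow> 'b \<Rightarrow> 'b) \<Rightarrow> 'a list list \<Rightarrow> 'b" where
  "aggregate_det z seq comb qs = foldl comb z (map (foldl seq z) qs)"

definition aggregate_deterministic ::
  "'b \<Rightarrow> ('b \<Rightarrow> 'a \<Rightarrow> 'b) \<Rightarrow> ('b \<Rightarrow> 'b \<Rightarrow> 'b) \<Rightarrow> bool" where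
  "aggregate_deterministic z seq comb \<longleftrightarrow>
     (\<forall>(P :: 'a list \<Rightarrow> 'a list list) L. is_partitioning P \<longrightarrow>
        aggregate_det z seq comb (P L) = foldl seq z L)"

end

theory Submission
  imports Defs
begin

lemma keyK:
  assumes "aggregate_deterministic z seq comb" and "mset qs = mset ps"
  shows "foldl comb z (map (foldl seq z) qs) = foldl seq z (concat ps)"
proof -
  define P where "P = (\<lambda>L. if L = concat ps then qs else [L])"
  have "is_partitioning P"
    unfolding is_partitioning_def P_def
  proof
    fix L show "\<exists>ps'. concat ps' = L \<and> mset (if L = concat ps then qs else [L]) = mset ps'"
      using assms(2) by (cases "L = concat ps") (auto intro: exI[of _ "[L]"] exI[of _ ps])
  qed
  then have "aggregate_det z seq comb (P (concat ps)) = foldl seq z (concat ps)"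
    using assms(1) unfolding aggregate_deterministic_def by blast
  then show ?thesis by (simp add: P_def aggregate_det_def)
qed

theorem lemma5:
  fixes z :: 'b and seq :: "'b \<Rightarrow> 'a \<Rightarrow> 'b" and comb :: "'b \<Rightarrow> 'b \<Rightarrow> 'b"
  assumes "aggregate_deterministic z seq comb"
  shows "(\<forall>x \<in> {foldl seq z L | L. True}. comb z x = x \<and> comb x z = x)
       \<and> (\<forall>x \<in> {foldl seq z L | L. True}. \<forall>y \<in> {foldl seq z L | L. True}.
            comb x y \<in> {foldl seq z L | L. True})
       \<and> (\<forall>x \<in> {foldl seq z L | L. True}. \<forall>y \<in> {foldl seq z L | L. True}.
            comb x y = comb y x)
       \<and> (\<forall>x \<in> {foldl seq z L | L. True}. \<forall>y \<in> {foldl seq z L | L. True}.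
            \<forall>w \<in> {foldl seq z L | L. True}. comb (comb x y) w = comb x (comb y w))"
proof -
  note K = keyK[OF assms]
  have id1: "comb z (foldl seq z A) = foldl seq z A" for A
    using K[of "[A]" "[A]"] by simp
  have id2: "comb (foldl seq z A) z = foldl seq z A" for A
    using K[of "[A,[]]" "[A,[]]"] id1 by simp
  have cl: "comb (foldl seq z A) (foldl seq z B) = foldl seq z (A @ B)" for A B
    using K[of "[A,B]" "[A,B]"] id1 by simp
  have cm: "comb (foldl seq z B) (foldl seq z A) = foldl seq z (A @ B)" for A B
    using K[of "[B,A]" "[A,B]"] id1 by (simp add: add_mset_commute)
  show ?thesis
  proof (intro conjI ballI)
    fix x assume "x \<in> {foldl seq z L | L. True}"
    then obtain A where x: "x = foldl seq z A" by blast
    show "comb z x = x" using id1 x by simp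
  next
    fix x assume "x \<in> {foldl seq z L | L. True}"
    then obtain A where x: "x = foldl seq z A" by blast
    show "comb x z = x" using id2 x by simp
  next
    fix x y assume "x \<in> {foldl seq z L | L. True}" "y \<in> {foldl seq z L | L. True}"
    then obtain A B where x: "x = foldl seq z A" and y: "y = foldl seq z B" by blast
    show "comb x y \<in> {foldl seq z L | L. True}" using cl x y by blast
  next
    fix x y assume "x \<in> {foldl seq z L | L. True}" "y \<in> {foldl seq z L | L. True}"
    then obtain A B where x: "x = foldl seq z A" and y: "y = foldl seq z B" by blast
    show "comb x y = comb y x" using cl[of A B] cm[of B A] x y by simp
  next
    fix x y w assume "x \<in> {foldl seq z L | L. True}" "y \<in> {foldl seq z L | L. True}"
      "w \<in> {foldl seq z L | L. True}"
    then obtain A B C where x: "x = foldl seq z A" and y: "y = foldl seq z B"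
      and w: "w = foldl seq z C" by blast
    show "comb (comb x y) w = comb x (comb y w)" unfolding x y w cl by simp
  qed
qed

end
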